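(* Let $s\ge1$, $L\ge1$, widths $d_0=s,d_1,\dots,d_{L+1}$, matrices $W_\ell\in\mathbb{R}^{d_{\ell+1}\times d_\ell}$ and vectors $\mathbf{v}_\ell\in\mathbb{R}^{d_{\ell+1}}$ ($\ell=0,\dots,L$), and a smooth $\sigma:\mathbb{R}\to\mathbb{R}$ applied componentwise. Suppose there are positive sequences $(\beta_j)_{j\ge1}$, $(R_\ell)_{\ell\ge1}$ and constants $\xi>0,\tau>0$ such that $\max_{1\le p\le d_1}|W_{0,p,j}|\le\beta_j$ for $j=1,\dots,s$, $\|W_\ell\|_\infty:=\max_p\sum_q|W_{\ell,p,q}|\le R_\ell$ for $\ell\ge1$, and $\sup_{x\in\mathbb{R}}|\sigma^{(n)}(x)|\le A_n:=\xi\,\tau^n\,n!$ for all $n\ge1$. Define $P_0:=1$, $P_k:=\prod_{t=1}^k(\xi\tau R_t)$ for $k\ge1$, $S_\ell:=\tau\sum_{k=0}^{\ell-1}P_k$, and $C_\ell:=\max\{\|G^{[\ell]}_\theta\|_\infty,\,P_\ell/S_\ell\}$, where $\|G^{[\ell]}_\theta\|_\infty:=\sup_{\mathbf{y}\in[0,1]^s}\max_p|G^{[\ell]}_\theta(\mathbf{y})_p|$. Then for every $1\le\ell\le L$, every component $1\le p\le d_{\ell+1}$, every multiindex $\boldsymbol{\nu}\in\mathbb{N}_0^s$ (including $\boldsymbol{\nu}=\mathbf{0}$) and every $\mathbf{y}\in[0,1]^s$: (a) the non-periodic network $G^{[0]}_\theta(\mathbf{y}):=W_0\mathbf{y}+\mathbf{v}_0$,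 $G^{[\ell]}_\theta(\mathbf{y}):=W_\ell\sigma(G^{[\ell-1]}_\theta(\mathbf{y}))+\mathbf{v}_\ell$ satisfies $$|\partial^{\boldsymbol{\nu}}G^{[\ell]}_\theta(\mathbf{y})_p|\le C_\ell\,|\boldsymbol{\nu}|!\,(S_\ell\boldsymbol{\beta})^{\boldsymbol{\nu}};$$ (b) the periodic network $G^{[0]}_\theta(\mathbf{y}):=W_0\sin(2\pi\mathbf{y})+\mathbf{v}_0$, $G^{[\ell]}_\theta(\mathbf{y}):=W_\ell\sigma(G^{[\ell-1]}_\theta(\mathbf{y}))+\mathbf{v}_\ell$ satisfies $$|\partial^{\boldsymbol{\nu}}G^{[\ell]}_\theta(\mathbf{y})_p|\le C_\ell\,(2\pi)^{|\boldsymbol{\nu}|}\sum_{\mathbf{m}\le\boldsymbol{\nu}}|\mathbf{m}|!\,(S_\ell\boldsymbol{\beta})^{\mathbf{m}}\,\mathcal{S}(\boldsymbol{\nu},\mathbf{m}).$$ (Here $C_\ell$ is defined with respect to the respective network.)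
   Context: For $\boldsymbol{\nu}\in\mathbb{N}_0^s$: $|\boldsymbol{\nu}|=\sum_j\nu_j$, $\partial^{\boldsymbol{\nu}}=\prod_j(\partial/\partial y_j)^{\nu_j}$, $(S\boldsymbol{\beta})^{\boldsymbol{\nu}}=\prod_j(S\beta_j)^{\nu_j}$, $\mathbf{m}\le\boldsymbol{\nu}$ componentwise. $\mathcal{S}(n,k)$ is the Stirling number of the second kind ($\mathcal{S}(n,0)=\delta_{n,0}$, $\mathcal{S}(n,k)=0$ for $k>n$, $\mathcal{S}(n,k)=\frac1{k!}\sum_{i=0}^k(-1)^{k-i}\binom ki i^n$ for $n\ge k$), and $\mathcal{S}(\boldsymbol{\nu},\mathbf{m})=\prod_j\mathcal{S}(\nu_j,m_j)$. The sine is applied componentwise. *)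

theory Defs
  imports "HOL-Analysis.Analysis" "HOL-Combinatorics.Stirling" "HOL-Library.FuncSet"
begin

text \<open>Vectors in R^s are functions nat => real, only indices j < s are used (0-based).
  Matrices W l are nat => nat => real, W l p q for p < d (Suc l), q < d l.\<close>

text \<open>Feed-forward network. The first layer is W_0 phi(y) + v_0 with phi applied
  componentwise (phi = id: non-periodic; phi = sin(2 pi .): periodic).\<close>
fun net :: "(real \<Rightarrow> real) \<Rightarrow> (real \<Rightarrow> real) \<Rightarrow> nat \<Rightarrow> (nat \<Rightarrow> nat)
            \<Rightarrow> (nat \<Rightarrow> nat \<Rightarrow> nat \<Rightarrow> real) \<Rightarrow> (nat \<Rightarrow> nat \<Rightarrow> real)
            \<Rightarrow> nat \<Rightarrow> (nat \<Rightarrow> real) \<Rightarrow> nat \<Rightarrow> real" where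
  "net phi \<sigma> s d W v 0 y p = (\<Sum>j<s. W 0 p j * phi (y j)) + v 0 p"
| "net phi \<sigma> s d W v (Suc l) y p =
     (\<Sum>q<d (Suc l). W (Suc l) p q * \<sigma> (net phi \<sigma> s d W v l y q)) + v (Suc l) p"

definition partial :: "nat \<Rightarrow> ((nat \<Rightarrow> real) \<Rightarrow> real) \<Rightarrow> (nat \<Rightarrow> real) \<Rightarrow> real" where
  "partial j f y = deriv (\<lambda>t. f (y(j := t))) (y j)"

fun mderiv :: "nat \<Rightarrow> (nat \<Rightarrow> nat) \<Rightarrow> ((nat \<Rightarrow> real) \<Rightarrow> real) \<Rightarrow> (nat \<Rightarrow> real) \<Rightarrow> real" where
  "mderiv 0 \<nu> f = f"
| "mderiv (Suc k) \<nu> f = (partial k ^^ \<nu> k) (mderiv k \<nu> f)"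

definition unit_cube :: "nat \<Rightarrow> (nat \<Rightarrow> real) set" where
  "unit_cube s = {y. \<forall>j<s. 0 \<le> y j \<and> y j \<le> 1}"

definition mabs :: "nat \<Rightarrow> (nat \<Rightarrow> nat) \<Rightarrow> nat" where
  "mabs s \<nu> = (\<Sum>j<s. \<nu> j)"

definition Pk :: "real \<Rightarrow> real \<Rightarrow> (nat \<Rightarrow> real) \<Rightarrow> nat \<Rightarrow> real" where
  "Pk \<xi> \<tau> R k = (\<Prod>t=1..k. \<xi> * \<tau> * R t)"

definition Sl :: "real \<Rightarrow> real \<Rightarrow> (nat \<Rightarrow> real) \<Rightarrow> nat \<Rightarrow> real" where
  "Sl \<xi> \<tau> R l = \<tau> * (\<Sum>k<l. Pk \<xi> \<tau> R k)"

definition net_supnorm :: "nat \<Rightarrow> (nat \<Rightarrow> nat) \<Rightarrow> ((nat \<Rightarrow> real) \<Rightarrow> nat \<Rightarrow> real) \<Rightarrow> nat \<Rightarrow> real" where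
  "net_supnorm s d G l = (SUP y\<in>unit_cube s. Max ((\<lambda>p. \<bar>G y p\<bar>) ` {..<d (Suc l)}))"

end

theory Submission imports Defs "HOL-Computational_Algebra.Formal_Power_Series" "HOL-Combinatorics.Stirling"
begin

inductive_set SM :: "(real \<Rightarrow> real) \<Rightarrow> ((nat \<Rightarrow> real) \<Rightarrow> real) set" for \<sigma> where
  const: "(\<lambda>y. c) \<in> SM \<sigma>"
| coord: "(\<lambda>y. y j) \<in> SM \<sigma>"
| add: "f \<in> SM \<sigma> \<Longrightarrow> g \<in> SM \<sigma> \<Longrightarrow> (\<lambda>y. f y + g y) \<in> SM \<sigma>"
| mult: "f \<in> SM \<sigma> \<Longrightarrow> g \<in> SM \<sigma> \<Longrightarrow> (\<lambda>y. f y * g y) \<in> SM \<sigma>"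
| comp: "f \<in> SM \<sigma> \<Longrightarrow> (\<lambda>y. (deriv ^^ k) \<sigma> (f y)) \<in> SM \<sigma>"

locale sm =
  fixes \<sigma> :: "real \<Rightarrow> real"
  assumes smooth: "\<forall>n x. ((deriv ^^ n) \<sigma> has_real_derivative (deriv ^^ Suc n) \<sigma> x) (at x)"
begin

lemma SM_deriv_ex:
  assumes "f \<in> SM \<sigma>"
  shows "\<exists>f'\<in>SM \<sigma>. \<forall>y. ((\<lambda>t. f (y(j:=t))) has_real_derivative f' y) (at (y j))"
  using assms
proof induction
  case (const c)
  then show ?case by (intro bexI[of _ "\<lambda>y. 0"]) (auto intro: SM.const)
next
  case (coord i)
  show ?case
  proof (cases "i = j")
    case True
    then show ?thesis by (intro bexI[of _ "\<lambda>y. 1"]) (auto intro!: SM.const derivative_eq_intros)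
  next
    case False
    then show ?thesis by (intro bexI[of _ "\<lambda>y. 0"]) (auto intro!: SM.const derivative_eq_intros)
  qed
next
  case (add f g)
  then obtain f' g' where h: "f' \<in> SM \<sigma>" "g' \<in> SM \<sigma>"
    "\<forall>y. ((\<lambda>t. f (y(j:=t))) has_real_derivative f' y) (at (y j))"
    "\<forall>y. ((\<lambda>t. g (y(j:=t))) has_real_derivative g' y) (at (y j))" by blast
  then show ?case
  proof (intro bexI[of _ "\<lambda>y. f' y + g' y"] allI)
    fix y
    show "((\<lambda>t. f (y(j := t)) + g (y(j := t))) has_real_derivative f' y + g' y) (at (y j))"
      using DERIV_add[OF h(3)[rule_format, of y] h(4)[rule_format, of y]] by simp
  qed (intro SM.add h(1,2))
next
  case (mult f g)
  then obtain f' g' where f': "f' \<in> SM \<sigma>" and g': "g' \<in> SM \<sigma>"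
    "\<forall>y. ((\<lambda>t. f (y(j:=t))) has_real_derivative f' y) (at (y j))"
    "\<forall>y. ((\<lambda>t. g (y(j:=t))) has_real_derivative g' y) (at (y j))" by blast
  then show ?case
  proof (intro bexI[of _ "\<lambda>y. f' y * g y + g' y * f y"] allI)
    fix y
    show "((\<lambda>t. f (y(j := t)) * g (y(j := t))) has_real_derivative f' y * g y + g' y * f y) (at (y j))"
      using DERIV_mult[OF g'(2)[rule_format, of y] g'(3)[rule_format, of y]] by simp
  qed (intro SM.add SM.mult mult f' g'(1))
next
  case (comp f k)
  then obtain f' where f': "f' \<in> SM \<sigma>"
    "\<forall>y. ((\<lambda>t. f (y(j:=t))) has_real_derivative f' y) (at (y j))" by blast
  show ?case
  proof (intro bexI[of _ "\<lambda>y. (deriv ^^ Suc k) \<sigma> (f y) * f' y"] allI)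
    fix y
    show "((\<lambda>t. (deriv ^^ k) \<sigma> (f (y(j := t)))) has_real_derivative (deriv ^^ Suc k) \<sigma> (f y) * f' y) (at (y j))"
      using DERIV_chain2[OF smooth[rule_format, of k "f (y(j := y j))"] f'(2)[rule_format, of y]] by simp
  qed (intro SM.mult SM.comp comp f')
qed

lemma SM_partial: "f \<in> SM \<sigma> \<Longrightarrow> partial j f \<in> SM \<sigma>"
  and SM_line: "f \<in> SM \<sigma> \<Longrightarrow> ((\<lambda>t. f (y(j:=t))) has_real_derivative partial j f y) (at (y j))"
proof -
  assume f: "f \<in> SM \<sigma>"
  from SM_deriv_ex[OF f, of j] obtain f' where f': "f' \<in> SM \<sigma>"
    "\<forall>y. ((\<lambda>t. f (y(j:=t))) has_real_derivative f' y) (at (y j))" by blast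
  have "partial j f = f'"
    using f'(2) by (auto simp: partial_def fun_eq_iff intro!: DERIV_imp_deriv)
  then show "partial j f \<in> SM \<sigma>" "((\<lambda>t. f (y(j:=t))) has_real_derivative partial j f y) (at (y j))"
    using f' by auto
qed

lemma partial_add: "f \<in> SM \<sigma> \<Longrightarrow> g \<in> SM \<sigma> \<Longrightarrow>
  partial j (\<lambda>y. f y + g y) = (\<lambda>y. partial j f y + partial j g y)"
proof
  fix y assume f: "f \<in> SM \<sigma>" and g: "g \<in> SM \<sigma>"
  have "((\<lambda>t. f (y(j:=t)) + g (y(j:=t))) has_real_derivative partial j f y + partial j g y) (at (y j))"
    using DERIV_add[OF SM_line[OF f, of y j] SM_line[OF g, of y j]] by simp
  then show "partial j (\<lambda>y. f y + g y) y = partial j f y + partial j g y"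
    unfolding partial_def by (rule DERIV_imp_deriv)
qed

lemma partial_mult: "f \<in> SM \<sigma> \<Longrightarrow> g \<in> SM \<sigma> \<Longrightarrow>
  partial j (\<lambda>y. f y * g y) = (\<lambda>y. partial j f y * g y + f y * partial j g y)"
proof
  fix y assume f: "f \<in> SM \<sigma>" and g: "g \<in> SM \<sigma>"
  have "((\<lambda>t. f (y(j:=t)) * g (y(j:=t))) has_real_derivative partial j f y * g y + partial j g y * f y) (at (y j))"
    using DERIV_mult[OF SM_line[OF f, of y j] SM_line[OF g, of y j]] by simp
  then show "partial j (\<lambda>y. f y * g y) y = partial j f y * g y + f y * partial j g y"
    unfolding partial_def by (subst DERIV_imp_deriv) (auto simp: algebra_simps)
qed

lemma partial_const: "partial j (\<lambda>y. c) = (\<lambda>y. 0)"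
  unfolding partial_def by simp

lemma partial_coord: "partial j (\<lambda>y. y i) = (\<lambda>y. if i = j then 1 else 0)"
  unfolding partial_def fun_eq_iff by auto

lemma partial_cmult: "f \<in> SM \<sigma> \<Longrightarrow> partial j (\<lambda>y. c * f y) = (\<lambda>y. c * partial j f y)"
  by (subst partial_mult) (auto intro: SM.const simp: partial_const)

lemma SM_sum: "finite I \<Longrightarrow> (\<And>i. i \<in> I \<Longrightarrow> f i \<in> SM \<sigma>) \<Longrightarrow> (\<lambda>y. \<Sum>i\<in>I. f i y) \<in> SM \<sigma>"
  by (induction I rule: finite_induct) (auto intro: SM.const SM.add)

lemma partial_sum: "finite I \<Longrightarrow> (\<And>i. i \<in> I \<Longrightarrow> f i \<in> SM \<sigma>) \<Longrightarrow>
  partial j (\<lambda>y. \<Sum>i\<in>I. f i y) = (\<lambda>y. \<Sum>i\<in>I. partial j (f i) y)"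
proof (induction I rule: finite_induct)
  case empty
  then show ?case by (simp add: partial_const)
next
  case (insert x F)
  then show ?case
    by (simp add: partial_add SM_sum)
qed

lemma partial_comp: "f \<in> SM \<sigma> \<Longrightarrow>
  partial j (\<lambda>y. (deriv ^^ k) \<sigma> (f y)) = (\<lambda>y. (deriv ^^ Suc k) \<sigma> (f y) * partial j f y)"
proof
  fix y assume f: "f \<in> SM \<sigma>"
  have "((\<lambda>t. (deriv ^^ k) \<sigma> (f (y(j:=t)))) has_real_derivative (deriv ^^ Suc k) \<sigma> (f y) * partial j f y) (at (y j))"
    using DERIV_chain2[OF smooth[rule_format, of k "f (y(j := y j))"] SM_line[OF f, of y j]] by simp
  then show "partial j (\<lambda>y. (deriv ^^ k) \<sigma> (f y)) y = (deriv ^^ Suc k) \<sigma> (f y) * partial j f y"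
    unfolding partial_def by (rule DERIV_imp_deriv)
qed

end

fun Dl :: "nat list \<Rightarrow> ((nat \<Rightarrow> real) \<Rightarrow> real) \<Rightarrow> (nat \<Rightarrow> real) \<Rightarrow> real" where
  "Dl [] f = f"
| "Dl (j # js) f = partial j (Dl js f)"

lemma Dl_snoc: "Dl (js @ [j]) f = Dl js (partial j f)"
  by (induction js) auto

lemma Dl_const: "js \<noteq> [] \<Longrightarrow> Dl js (\<lambda>y. c) = (\<lambda>y. 0)"
proof (induction js)
  case (Cons a js)
  have pc: "partial a (\<lambda>y. d) = (\<lambda>y. 0)" for d unfolding partial_def by simp
  show ?case
  proof (cases "js = []")
    case True then show ?thesis using pc by simp
  next
    case False then show ?thesis using Cons pc[of 0] by simp
  qed
qed simp

lemma funpow_partial: "(partial k ^^ n) (Dl js f) = Dl (replicate n k @ js) f"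
  by (induction n) auto

fun lst :: "(nat \<Rightarrow> nat) \<Rightarrow> nat \<Rightarrow> nat list" where
  "lst \<nu> 0 = []"
| "lst \<nu> (Suc k) = replicate (\<nu> k) k @ lst \<nu> k"

lemma mderiv_Dl: "mderiv k \<nu> f = Dl (lst \<nu> k) f"
  by (induction k) (auto simp: funpow_partial)

lemma length_lst: "length (lst \<nu> k) = (\<Sum>j<k. \<nu> j)"
  by (induction k) auto

lemma prod_lst: "prod_list (map \<beta> (lst \<nu> k)) = (\<Prod>j<k. \<beta> j ^ \<nu> j)"
  by (induction k) (auto simp: prod_list_replicate mult.commute)

lemma lst_cong: "(\<And>j. j < k \<Longrightarrow> \<nu> j = \<mu> j) \<Longrightarrow> lst \<nu> k = lst \<mu> k"
  by (induction k) auto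

context sm begin

lemma Dl_SM: "f \<in> SM \<sigma> \<Longrightarrow> Dl js f \<in> SM \<sigma>"
  by (induction js) (auto intro: SM_partial)

lemma Dl_add: "f \<in> SM \<sigma> \<Longrightarrow> g \<in> SM \<sigma> \<Longrightarrow>
  Dl js (\<lambda>y. f y + g y) = (\<lambda>y. Dl js f y + Dl js g y)"
  by (induction js) (auto simp: partial_add Dl_SM)

lemma Dl_sum: "finite I \<Longrightarrow> (\<And>i. i \<in> I \<Longrightarrow> f i \<in> SM \<sigma>) \<Longrightarrow>
  Dl js (\<lambda>y. \<Sum>i\<in>I. f i y) = (\<lambda>y. \<Sum>i\<in>I. Dl js (f i) y)"
  by (induction js) (auto simp: partial_sum Dl_SM)

lemma Dl_cmult: "f \<in> SM \<sigma> \<Longrightarrow> Dl js (\<lambda>y. c * f y) = (\<lambda>y. c * Dl js f y)"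
  by (induction js) (auto simp: partial_cmult Dl_SM)

end

definition bnd :: "(nat \<Rightarrow> real) \<Rightarrow> real fps \<Rightarrow> nat list \<Rightarrow> real" where
  "bnd \<beta> F js = fact (length js) * fps_nth F (length js) * prod_list (map \<beta> js)"

lemma bnd_snoc: "bnd \<beta> F (js @ [j]) = bnd \<beta> (fps_const (\<beta> j) * fps_deriv F) js"
  unfolding bnd_def by (simp add: algebra_simps)

lemma bnd_add: "bnd \<beta> (F + G) js = bnd \<beta> F js + bnd \<beta> G js"
  unfolding bnd_def by (simp add: algebra_simps)

lemma bnd_Nil: "bnd \<beta> F [] = fps_nth F 0"
  unfolding bnd_def by simp

context sm begin

lemma deriv_bound:
  assumes g: "g \<in> SM \<sigma>" and gb: "\<forall>js y. js \<noteq> [] \<longrightarrow> \<bar>Dl js g y\<bar> \<le> bnd \<beta> G js"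
  shows "\<bar>Dl js (partial j g) y\<bar> \<le> bnd \<beta> (fps_const (\<beta> j) * fps_deriv G) js"
  using gb[rule_format, of "js @ [j]" y] by (simp add: Dl_snoc bnd_snoc)

lemma prod_bound:
  "\<forall>f g F G. f \<in> SM \<sigma> \<longrightarrow> g \<in> SM \<sigma> \<longrightarrow>
     (\<forall>js y. length js \<le> n \<longrightarrow> \<bar>Dl js f y\<bar> \<le> bnd \<beta> F js) \<longrightarrow>
     (\<forall>js y. length js \<le> n \<longrightarrow> \<bar>Dl js g y\<bar> \<le> bnd \<beta> G js) \<longrightarrow>
     (\<forall>js y. length js \<le> n \<longrightarrow> \<bar>Dl js (\<lambda>y. f y * g y) y\<bar> \<le> bnd \<beta> (F * G) js)"
proof (induction n)
  case 0
  show ?case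
  proof (intro allI impI)
    fix f g F G and js :: "nat list" and y
    assume hf: "\<forall>js y. length js \<le> 0 \<longrightarrow> \<bar>Dl js f y\<bar> \<le> bnd \<beta> F js"
      and hg: "\<forall>js y. length js \<le> 0 \<longrightarrow> \<bar>Dl js g y\<bar> \<le> bnd \<beta> G js"
      and l: "length js \<le> 0"
    then have js: "js = []" by simp
    have "\<bar>f y\<bar> \<le> fps_nth F 0" "\<bar>g y\<bar> \<le> fps_nth G 0" using hf[rule_format, of "[]" y] hg[rule_format, of "[]" y]
      by (simp_all add: bnd_Nil)
    then have "\<bar>f y * g y\<bar> \<le> fps_nth F 0 * fps_nth G 0" unfolding abs_mult
      by (intro mult_mono) auto
    then show "\<bar>Dl js (\<lambda>y. f y * g y) y\<bar> \<le> bnd \<beta> (F * G) js"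
      using js by (simp add: bnd_Nil)
  qed
next
  case (Suc n)
  show ?case
  proof (intro allI impI)
    fix f g F G and js :: "nat list" and y
    assume f: "f \<in> SM \<sigma>" and g: "g \<in> SM \<sigma>"
      and hf: "\<forall>js y. length js \<le> Suc n \<longrightarrow> \<bar>Dl js f y\<bar> \<le> bnd \<beta> F js"
      and hg: "\<forall>js y. length js \<le> Suc n \<longrightarrow> \<bar>Dl js g y\<bar> \<le> bnd \<beta> G js"
      and l: "length js \<le> Suc n"
    have hf': "\<forall>js y. length js \<le> n \<longrightarrow> \<bar>Dl js f y\<bar> \<le> bnd \<beta> F js"
      and hg': "\<forall>js y. length js \<le> n \<longrightarrow> \<bar>Dl js g y\<bar> \<le> bnd \<beta> G js" using hf hg by auto
    show "\<bar>Dl js (\<lambda>y. f y * g y) y\<bar> \<le> bnd \<beta> (F * G) js"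
    proof (cases "length js \<le> n")
      case True
      then show ?thesis using Suc.IH f g hf' hg' by blast
    next
      case False
      then have "js \<noteq> []" by auto
      then obtain js' j where js: "js = js' @ [j]" by (metis rev_exhaust)
      with l have l': "length js' \<le> n" by simp
      have pf: "\<forall>js y. length js \<le> n \<longrightarrow> \<bar>Dl js (partial j f) y\<bar> \<le> bnd \<beta> (fps_const (\<beta> j) * fps_deriv F) js"
        using hf by (auto simp: Dl_snoc[symmetric] bnd_snoc[symmetric])
      have pg: "\<forall>js y. length js \<le> n \<longrightarrow> \<bar>Dl js (partial j g) y\<bar> \<le> bnd \<beta> (fps_const (\<beta> j) * fps_deriv G) js"
        using hg by (auto simp: Dl_snoc[symmetric] bnd_snoc[symmetric])
      have A: "\<bar>Dl js' (\<lambda>y. partial j f y * g y) y\<bar> \<le> bnd \<beta> ((fps_const (\<beta> j) * fps_deriv F) * G) js'"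
        using Suc.IH SM_partial[OF f] g pf hg' l' by blast
      have B: "\<bar>Dl js' (\<lambda>y. f y * partial j g y) y\<bar> \<le> bnd \<beta> (F * (fps_const (\<beta> j) * fps_deriv G)) js'"
        using Suc.IH SM_partial[OF g] f pg hf' l' by blast
      have "Dl js (\<lambda>y. f y * g y) y = Dl js' (\<lambda>y. partial j f y * g y) y + Dl js' (\<lambda>y. f y * partial j g y) y"
        unfolding js Dl_snoc partial_mult[OF f g]
        by (subst Dl_add) (auto intro: SM.mult SM_partial f g)
      also have "\<bar>\<dots>\<bar> \<le> bnd \<beta> ((fps_const (\<beta> j) * fps_deriv F) * G) js' + bnd \<beta> (F * (fps_const (\<beta> j) * fps_deriv G)) js'"
        using A B by linarith
      also have "\<dots> = bnd \<beta> (F * G) js"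
        unfolding js bnd_snoc bnd_add[symmetric] by (simp add: algebra_simps)
      finally show ?thesis .
    qed
  qed
qed

end

definition Phi :: "real \<Rightarrow> real \<Rightarrow> real fps \<Rightarrow> nat \<Rightarrow> real fps" where
  "Phi \<xi> \<tau> G k = fps_const (\<xi> * \<tau> ^ k * fact k) * (inverse (1 - fps_const \<tau> * G)) ^ Suc k"

lemma Phi_0: "fps_nth G 0 = 0 \<Longrightarrow> fps_nth (Phi \<xi> \<tau> G k) 0 = \<xi> * \<tau> ^ k * fact k"
  unfolding Phi_def by (simp add: fps_nth_power_0)

lemma Phi_deriv:
  assumes G0: "fps_nth G 0 = 0"
  shows "fps_deriv (Phi \<xi> \<tau> G k) = Phi \<xi> \<tau> G (Suc k) * fps_deriv G"
proof -
  define a where "a = 1 - fps_const \<tau> * G"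
  define X where "X = inverse a"
  have a0: "fps_nth a 0 \<noteq> 0" using G0 unfolding a_def by simp
  have dX: "fps_deriv X = fps_const \<tau> * fps_deriv G * X ^ 2"
    unfolding X_def using fps_inverse_deriv[OF a0] by (simp add: a_def)
  have "fps_deriv (Phi \<xi> \<tau> G k) = fps_const (\<xi> * \<tau> ^ k * fact k) * (fps_const (of_nat (Suc k)) * fps_deriv X * X ^ k)"
    unfolding Phi_def a_def[symmetric] X_def[symmetric] by (simp add: fps_deriv_power del: power_Suc)
  also have "\<dots> = fps_const (\<xi> * \<tau> ^ k * fact k) * fps_const (of_nat (Suc k)) * fps_const \<tau> * (X ^ Suc (Suc k)) * fps_deriv G"
    unfolding dX by (simp add: algebra_simps power2_eq_square)
  also have "\<dots> = Phi \<xi> \<tau> G (Suc k) * fps_deriv G"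
  proof -
    have c: "(\<xi> * \<tau> ^ k * fact k) * of_nat (Suc k) * \<tau> = \<xi> * \<tau> ^ Suc k * fact (Suc k)"
      by (simp add: algebra_simps)
    show ?thesis
      unfolding Phi_def a_def[symmetric] X_def[symmetric] fps_const_mult c ..
  qed
  finally show ?thesis .
qed

context sm begin

lemma comp_bound:
  assumes g: "g \<in> SM \<sigma>" and G0: "fps_nth G 0 = 0"
    and gb: "\<forall>js y. js \<noteq> [] \<longrightarrow> \<bar>Dl js g y\<bar> \<le> bnd \<beta> G js"
    and \<sigma>bd: "\<forall>n\<ge>1. \<forall>x. \<bar>(deriv ^^ n) \<sigma> x\<bar> \<le> \<xi> * \<tau> ^ n * fact n"
  shows "\<forall>k js y. length js \<le> n \<longrightarrow> (k \<ge> 1 \<or> js \<noteq> []) \<longrightarrow>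
           \<bar>Dl js (\<lambda>y. (deriv ^^ k) \<sigma> (g y)) y\<bar> \<le> bnd \<beta> (Phi \<xi> \<tau> G k) js"
proof (induction n)
  case 0
  show ?case
  proof (intro allI impI)
    fix k :: nat and js :: "nat list" and y
    assume "length js \<le> 0" and k: "k \<ge> 1 \<or> js \<noteq> []"
    then have js: "js = []" and "k \<ge> 1" by auto
    then show "\<bar>Dl js (\<lambda>y. (deriv ^^ k) \<sigma> (g y)) y\<bar> \<le> bnd \<beta> (Phi \<xi> \<tau> G k) js"
      using \<sigma>bd by (simp add: bnd_Nil Phi_0[OF G0])
  qed
next
  case (Suc n)
  show ?case
  proof (intro allI impI)
    fix k :: nat and js :: "nat list" and y
    assume l: "length js \<le> Suc n" and k: "k \<ge> 1 \<or> js \<noteq> []"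
    show "\<bar>Dl js (\<lambda>y. (deriv ^^ k) \<sigma> (g y)) y\<bar> \<le> bnd \<beta> (Phi \<xi> \<tau> G k) js"
    proof (cases "length js \<le> n")
      case True
      then show ?thesis using Suc.IH k by blast
    next
      case False
      then have "js \<noteq> []" by auto
      then obtain js' j where js: "js = js' @ [j]" by (metis rev_exhaust)
      with l have l': "length js' \<le> n" by simp
      have h1: "\<forall>js y. length js \<le> n \<longrightarrow> \<bar>Dl js (\<lambda>y. (deriv ^^ Suc k) \<sigma> (g y)) y\<bar> \<le> bnd \<beta> (Phi \<xi> \<tau> G (Suc k)) js"
      proof -
        have "Suc k \<ge> 1" by simp
        then show ?thesis using Suc.IH by blast
      qed
      have h2: "\<forall>js y. length js \<le> n \<longrightarrow> \<bar>Dl js (partial j g) y\<bar> \<le> bnd \<beta> (fps_const (\<beta> j) * fps_deriv G) js"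
        using deriv_bound[OF g gb] by blast
      have "\<bar>Dl js' (\<lambda>y. (deriv ^^ Suc k) \<sigma> (g y) * partial j g y) y\<bar>
          \<le> bnd \<beta> (Phi \<xi> \<tau> G (Suc k) * (fps_const (\<beta> j) * fps_deriv G)) js'"
        using prod_bound[of n] SM.comp[OF g] SM_partial[OF g] h1 h2 l' by blast
      also have "\<dots> = bnd \<beta> (Phi \<xi> \<tau> G k) js"
        unfolding js bnd_snoc Phi_deriv[OF G0] by (simp add: algebra_simps)
      finally show ?thesis unfolding js Dl_snoc partial_comp[OF g] .
    qed
  qed
qed

end

definition Geo :: "real \<Rightarrow> real fps" where "Geo c = Abs_fps (\<lambda>n. c ^ n)"
definition Gf :: "real \<Rightarrow> real \<Rightarrow> real fps" where "Gf P S = fps_const P * (fps_X * Geo S)"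

lemma Gf_nth: "fps_nth (Gf P S) n = (if n = 0 then 0 else P * S ^ (n - 1))"
  unfolding Gf_def Geo_def by simp

lemma Geo_inv: "Geo c * (1 - fps_const c * fps_X) = 1"
proof (rule fps_ext)
  fix n
  show "fps_nth (Geo c * (1 - fps_const c * fps_X)) n = fps_nth 1 n"
    unfolding ring_distribs by (cases n) (simp_all add: Geo_def mult.commute[of _ fps_X] mult.assoc[symmetric])
qed

lemma inv_Gf: "inverse (1 - fps_const \<tau> * Gf P S) = (1 - fps_const S * fps_X) * Geo (S + \<tau> * P)"
proof (rule fps_inverse_unique)
  have "(1 - fps_const \<tau> * Gf P S) * (1 - fps_const S * fps_X) =
        (1 - fps_const S * fps_X) - fps_const (\<tau> * P) * fps_X * (Geo S * (1 - fps_const S * fps_X))"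
    unfolding Gf_def fps_const_mult[symmetric] by algebra
  also have "\<dots> = 1 - fps_const (S + \<tau> * P) * fps_X"
    unfolding Geo_inv fps_const_add[symmetric] fps_const_mult[symmetric] by algebra
  finally have e: "(1 - fps_const \<tau> * Gf P S) * (1 - fps_const S * fps_X) = 1 - fps_const (S + \<tau> * P) * fps_X" .
  have "(1 - fps_const \<tau> * Gf P S) * ((1 - fps_const S * fps_X) * Geo (S + \<tau> * P))
     = Geo (S + \<tau> * P) * ((1 - fps_const \<tau> * Gf P S) * (1 - fps_const S * fps_X))"
    by (metis mult.assoc mult.commute)
  then show "(1 - fps_const \<tau> * Gf P S) * ((1 - fps_const S * fps_X) * Geo (S + \<tau> * P)) = 1"
    using Geo_inv[of "S + \<tau> * P"] e by simp
qed

lemma Phi0_Gf: "fps_nth (Phi \<xi> \<tau> (Gf P S) 0) n = (if n = 0 then \<xi> else \<xi> * \<tau> * P * (S + \<tau> * P) ^ (n - 1))"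
proof -
  have "Phi \<xi> \<tau> (Gf P S) 0 = fps_const \<xi> * ((1 - fps_const S * fps_X) * Geo (S + \<tau> * P))"
    unfolding Phi_def inv_Gf by simp
  also have "fps_nth \<dots> n = (if n = 0 then \<xi> else \<xi> * \<tau> * P * (S + \<tau> * P) ^ (n - 1))"
  proof (cases n)
    case 0
    then show ?thesis by (simp add: Geo_def ring_distribs)
  next
    case (Suc m)
    have "fps_nth ((1 - fps_const S * fps_X) * Geo (S + \<tau> * P)) n = (S + \<tau> * P) ^ Suc m - S * (S + \<tau> * P) ^ m"
      unfolding ring_distribs using Suc by (simp add: Geo_def mult.assoc)
    also have "\<dots> = \<tau> * P * (S + \<tau> * P) ^ m" by (simp add: algebra_simps)
    finally show ?thesis using Suc by simp
  qed
  finally show ?thesis .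
qed


inductive Hom :: "nat \<Rightarrow> real \<Rightarrow> (real \<Rightarrow> real) \<Rightarrow> bool" where
  zero: "N \<ge> 0 \<Longrightarrow> Hom m N (\<lambda>t. 0)"
| const: "Hom 0 \<bar>c\<bar> (\<lambda>t. c)"
| sin: "Hom m N f \<Longrightarrow> Hom (Suc m) N (\<lambda>t. sin (2 * pi * t) * f t)"
| cos: "Hom m N f \<Longrightarrow> Hom (Suc m) N (\<lambda>t. cos (2 * pi * t) * f t)"
| add: "Hom m N1 f \<Longrightarrow> Hom m N2 g \<Longrightarrow> Hom m (N1 + N2) (\<lambda>t. f t + g t)"
| scale: "Hom m N f \<Longrightarrow> Hom m (\<bar>c\<bar> * N) (\<lambda>t. c * f t)"
| mono: "Hom m N f \<Longrightarrow> N \<le> N' \<Longrightarrow> Hom m N' f"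

lemma Hom_bound: "Hom m N f \<Longrightarrow> \<bar>f t\<bar> \<le> N"
proof (induction rule: Hom.induct)
  case (sin m N f)
  have "\<bar>sin (2 * pi * t) * f t\<bar> = \<bar>sin (2 * pi * t)\<bar> * \<bar>f t\<bar>" by (rule abs_mult)
  also have "\<dots> \<le> 1 * N" by (intro mult_mono sin) auto
  finally show ?case by simp
next
  case (cos m N f)
  have "\<bar>cos (2 * pi * t) * f t\<bar> = \<bar>cos (2 * pi * t)\<bar> * \<bar>f t\<bar>" by (rule abs_mult)
  also have "\<dots> \<le> 1 * N" by (intro mult_mono cos) auto
  finally show ?case by simp
next
  case (add m N1 f N2 g)
  then show ?case by (smt (verit))
next
  case (scale m N f c)
  then show ?case by (simp add: abs_mult mult_left_mono)
qed auto

lemma Hom_nonneg: "Hom m N f \<Longrightarrow> N \<ge> 0"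
  using Hom_bound[of m N f 0] by simp

lemma Hom_deriv: "Hom m N f \<Longrightarrow> \<exists>f'. Hom m (2 * pi * m * N) f' \<and> (\<forall>t. (f has_real_derivative f' t) (at t))"
proof (induction rule: Hom.induct)
  case (zero N m)
  then show ?case by (intro exI[of _ "\<lambda>t. 0"]) (auto intro!: Hom.zero)
next
  case (const c)
  then show ?case by (intro exI[of _ "\<lambda>t. 0"]) (auto intro!: Hom.zero)
next
  case (sin m N f)
  then obtain f' where f': "Hom m (2 * pi * m * N) f'" "\<forall>t. (f has_real_derivative f' t) (at t)" by blast
  have N: "N \<ge> 0" using sin(1) by (rule Hom_nonneg)
  have "Hom (Suc m) (\<bar>2 * pi\<bar> * N + 2 * pi * m * N) (\<lambda>t. 2 * pi * (cos (2 * pi * t) * f t) + sin (2 * pi * t) * f' t)"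
    by (intro Hom.add Hom.scale Hom.cos Hom.sin sin f')
  then have "Hom (Suc m) (2 * pi * Suc m * N) (\<lambda>t. 2 * pi * (cos (2 * pi * t) * f t) + sin (2 * pi * t) * f' t)"
    by (rule Hom.mono) (simp add: algebra_simps)
  moreover have "((\<lambda>t. sin (2 * pi * t) * f t) has_real_derivative 2 * pi * (cos (2 * pi * t) * f t) + sin (2 * pi * t) * f' t) (at t)" for t
    by (rule derivative_eq_intros f'(2)[rule_format] refl | simp add: algebra_simps)+
  ultimately show ?case by blast
next
  case (cos m N f)
  then obtain f' where f': "Hom m (2 * pi * m * N) f'" "\<forall>t. (f has_real_derivative f' t) (at t)" by blast
  have N: "N \<ge> 0" using cos(1) by (rule Hom_nonneg)
  have "Hom (Suc m) (\<bar>- 2 * pi\<bar> * N + 2 * pi * m * N) (\<lambda>t. (- 2 * pi) * (sin (2 * pi * t) * f t) + cos (2 * pi * t) * f' t)"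
    by (intro Hom.add Hom.scale Hom.cos Hom.sin cos f')
  then have "Hom (Suc m) (2 * pi * Suc m * N) (\<lambda>t. (- 2 * pi) * (sin (2 * pi * t) * f t) + cos (2 * pi * t) * f' t)"
    by (rule Hom.mono) (simp add: algebra_simps)
  moreover have "((\<lambda>t. cos (2 * pi * t) * f t) has_real_derivative (- 2 * pi) * (sin (2 * pi * t) * f t) + cos (2 * pi * t) * f' t) (at t)" for t
    by (rule derivative_eq_intros f'(2)[rule_format] refl | simp add: algebra_simps)+
  ultimately show ?case by blast
next
  case (add m N1 f N2 g)
  then obtain f' g' where "Hom m (2 * pi * m * N1) f'" "\<forall>t. (f has_real_derivative f' t) (at t)"
    "Hom m (2 * pi * m * N2) g'" "\<forall>t. (g has_real_derivative g' t) (at t)" by blast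
  then show ?case
    by (intro exI[of _ "\<lambda>t. f' t + g' t"])
       (auto intro!: DERIV_add simp: ring_distribs dest: Hom.add)
next
  case (scale m N f c)
  then obtain f' where f': "Hom m (2 * pi * m * N) f'" "\<forall>t. (f has_real_derivative f' t) (at t)" by blast
  have "Hom m (2 * pi * m * (\<bar>c\<bar> * N)) (\<lambda>t. c * f' t)"
    using Hom.scale[OF f'(1), of c] by (simp add: algebra_simps)
  then show ?case using f'(2) by (intro exI[of _ "\<lambda>t. c * f' t"]) (auto intro!: DERIV_cmult)
next
  case (mono m N f N')
  then obtain f' where f': "Hom m (2 * pi * m * N) f'" "\<forall>t. (f has_real_derivative f' t) (at t)" by blast
  have "Hom m (2 * pi * m * N') f'"
    by (rule Hom.mono[OF f'(1)]) (simp add: mono.hyps mult_left_mono)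
  then show ?case using f'(2) by blast
qed

fun T :: "nat \<Rightarrow> nat \<Rightarrow> real \<Rightarrow> real" where
  "T 0 r = (\<lambda>t. if r = 0 then 1 else 0)"
| "T (Suc n) r = (\<lambda>t. deriv (T n r) t + (if r = 0 then 0 else T n (r - 1) t * (2 * pi * cos (2 * pi * t))))"

lemma Hom_deriv': "Hom m N f \<Longrightarrow> Hom m (2 * pi * m * N) (deriv f) \<and> (\<forall>t. (f has_real_derivative deriv f t) (at t))"
proof -
  assume "Hom m N f"
  from Hom_deriv[OF this] obtain f' where f': "Hom m (2 * pi * m * N) f'" "\<forall>t. (f has_real_derivative f' t) (at t)" by blast
  have "deriv f = f'" using f'(2) by (auto simp: fun_eq_iff intro: DERIV_imp_deriv)
  then show ?thesis using f' by simp
qed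

lemma T_Hom: "Hom r ((2 * pi) ^ n * real (Stirling n r)) (T n r)"
proof (induction n arbitrary: r)
  case 0
  show ?case
  proof (cases r)
    case 0
    then show ?thesis using Hom.const[of 1] by simp
  next
    case (Suc r')
    then show ?thesis by (simp add: Hom.zero)
  qed
next
  case (Suc n)
  have d: "Hom r (2 * pi * r * ((2 * pi) ^ n * real (Stirling n r))) (deriv (T n r))"
    using Hom_deriv'[OF Suc.IH[of r]] by blast
  show ?case
  proof (cases r)
    case 0
    have "Hom r (2 * pi * r * ((2 * pi) ^ n * real (Stirling n r)) + 0) (\<lambda>t. deriv (T n r) t + 0)"
      by (intro Hom.add d Hom.zero) simp
    then show ?thesis using 0 by simp
  next
    case (Suc r')
    have c: "Hom r (\<bar>2 * pi\<bar> * ((2 * pi) ^ n * real (Stirling n r'))) (\<lambda>t. cos (2 * pi * t) * (2 * pi * T n r' t))"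
      unfolding Suc by (intro Hom.cos Hom.scale Suc.IH)
    have "Hom r (2 * pi * r * ((2 * pi) ^ n * real (Stirling n r)) + \<bar>2 * pi\<bar> * ((2 * pi) ^ n * real (Stirling n r')))
            (\<lambda>t. deriv (T n r) t + cos (2 * pi * t) * (2 * pi * T n r' t))"
      by (intro Hom.add d c)
    moreover have "2 * pi * r * ((2 * pi) ^ n * real (Stirling n r)) + \<bar>2 * pi\<bar> * ((2 * pi) ^ n * real (Stirling n r'))
        = (2 * pi) ^ Suc n * real (Stirling (Suc n) r)"
      using Suc by (simp add: algebra_simps)
    ultimately show ?thesis using Suc by (simp add: algebra_simps)
  qed
qed

lemma T_bound: "\<bar>T n r t\<bar> \<le> (2 * pi) ^ n * real (Stirling n r)"
  using Hom_bound[OF T_Hom] .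

lemma T_has_deriv: "(T n r has_real_derivative deriv (T n r) t) (at t)"
  using Hom_deriv'[OF T_Hom] by blast

lemma T_zero: "n < r \<Longrightarrow> T n r = (\<lambda>t. 0)"
proof (induction n arbitrary: r)
  case (Suc n)
  then have "T n r = (\<lambda>t. 0)" "T n (r - 1) = (\<lambda>t. 0)" by auto
  then show ?case using Suc.prems by simp
qed simp


definition Phs :: "(nat \<Rightarrow> real) \<Rightarrow> nat \<Rightarrow> real" where
  "Phs y = (\<lambda>j. sin (2 * pi * y j))"

lemma Phs_upd: "Phs (y(k := t)) = (Phs y)(k := sin (2 * pi * t))"
  unfolding Phs_def by auto

lemma T_shift_sum:
  fixes Q :: "nat \<Rightarrow> real"
  shows "(\<Sum>r\<le>n. deriv (T n r) t * Q r + T n r t * (Q (Suc r) * (2 * pi * cos (2 * pi * t))))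
       = (\<Sum>r\<le>Suc n. T (Suc n) r t * Q r)"
proof -
  have z: "deriv (T n (Suc n)) t = 0" using T_zero[of n "Suc n"] by simp
  have "(\<Sum>r\<le>Suc n. T (Suc n) r t * Q r) =
        (\<Sum>r\<le>Suc n. deriv (T n r) t * Q r) + (\<Sum>r\<le>Suc n. (if r = 0 then 0 else T n (r - 1) t * (2 * pi * cos (2 * pi * t))) * Q r)"
    by (simp add: sum.distrib ring_distribs)
  also have "(\<Sum>r\<le>Suc n. deriv (T n r) t * Q r) = (\<Sum>r\<le>n. deriv (T n r) t * Q r)"
    using z by simp
  also have "(\<Sum>r\<le>Suc n. (if r = 0 then 0 else T n (r - 1) t * (2 * pi * cos (2 * pi * t))) * Q r)
      = (\<Sum>r\<le>n. T n r t * (Q (Suc r) * (2 * pi * cos (2 * pi * t))))"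
    by (subst sum.atMost_Suc_shift) (simp add: algebra_simps)
  finally show ?thesis by (simp add: sum.distrib)
qed

context sm begin

lemma line_Phs:
  assumes Q: "Q \<in> SM \<sigma>"
  shows "((\<lambda>t. Q ((Phs y)(k := sin (2 * pi * t)))) has_real_derivative
          partial k Q (Phs y) * (2 * pi * cos (2 * pi * y k))) (at (y k))"
proof -
  have s: "((\<lambda>t. sin (2 * pi * t)) has_real_derivative cos (2 * pi * y k) * (2 * pi)) (at (y k))"
    by (rule derivative_eq_intros refl | simp)+
  have q: "((\<lambda>u. Q ((Phs y)(k := u))) has_real_derivative partial k Q (Phs y)) (at (sin (2 * pi * y k)))"
    using SM_line[OF Q, of "Phs y" k] by (simp add: Phs_def)
  show ?thesis using DERIV_chain2[OF q s] by (simp add: algebra_simps)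
qed

lemma oneD:
  assumes I: "finite I" and K: "\<And>i. i \<in> I \<Longrightarrow> K i \<in> SM \<sigma>"
    and c: "\<And>i y t. c i (y(k := t)) = c i y"
  shows "(partial k ^^ n) (\<lambda>y. \<Sum>i\<in>I. c i y * K i (Phs y)) =
         (\<lambda>y. \<Sum>i\<in>I. c i y * (\<Sum>r\<le>n. T n r (y k) * (partial k ^^ r) (K i) (Phs y)))"
proof (induction n)
  case 0
  then show ?case by simp
next
  case (Suc n)
  have KS: "(partial k ^^ r) (K i) \<in> SM \<sigma>" if "i \<in> I" for i r
    using K[OF that] by (induction r) (auto intro: SM_partial)
  show ?case
  proof
    fix y
    have eq: "(\<lambda>t. (\<Sum>i\<in>I. c i (y(k:=t)) * (\<Sum>r\<le>n. T n r ((y(k:=t)) k) * (partial k ^^ r) (K i) (Phs (y(k:=t))))))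
       = (\<lambda>t. (\<Sum>i\<in>I. c i y * (\<Sum>r\<le>n. T n r t * (partial k ^^ r) (K i) ((Phs y)(k := sin (2 * pi * t))))))"
      by (simp add: c Phs_upd)
    have D: "((\<lambda>t. (\<Sum>i\<in>I. c i y * (\<Sum>r\<le>n. T n r t * (partial k ^^ r) (K i) ((Phs y)(k := sin (2 * pi * t)))))) has_real_derivative
       (\<Sum>i\<in>I. c i y * (\<Sum>r\<le>n. deriv (T n r) (y k) * (partial k ^^ r) (K i) (Phs y) +
          T n r (y k) * ((partial k ^^ Suc r) (K i) (Phs y) * (2 * pi * cos (2 * pi * y k)))))) (at (y k))"
    proof (intro DERIV_sum DERIV_cmult)
      fix i r assume i: "i \<in> I"
      have "((\<lambda>t. T n r t * (partial k ^^ r) (K i) ((Phs y)(k := sin (2 * pi * t)))) has_real_derivative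
             deriv (T n r) (y k) * (partial k ^^ r) (K i) ((Phs y)(k := sin (2 * pi * y k))) +
             partial k ((partial k ^^ r) (K i)) (Phs y) * (2 * pi * cos (2 * pi * y k)) * T n r (y k)) (at (y k))"
        by (rule DERIV_mult[OF T_has_deriv line_Phs[OF KS[OF i]]])
      moreover have "(Phs y)(k := sin (2 * pi * y k)) = Phs y" by (auto simp: Phs_def)
      ultimately show "((\<lambda>t. T n r t * (partial k ^^ r) (K i) ((Phs y)(k := sin (2 * pi * t)))) has_real_derivative
          deriv (T n r) (y k) * (partial k ^^ r) (K i) (Phs y) +
          T n r (y k) * ((partial k ^^ Suc r) (K i) (Phs y) * (2 * pi * cos (2 * pi * y k)))) (at (y k))"
        by (simp add: algebra_simps)
    qed
    have "(partial k ^^ Suc n) (\<lambda>y. \<Sum>i\<in>I. c i y * K i (Phs y)) y =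
       partial k (\<lambda>y. \<Sum>i\<in>I. c i y * (\<Sum>r\<le>n. T n r (y k) * (partial k ^^ r) (K i) (Phs y))) y"
      using Suc.IH by simp
    also have "\<dots> = (\<Sum>i\<in>I. c i y * (\<Sum>r\<le>n. deriv (T n r) (y k) * (partial k ^^ r) (K i) (Phs y) +
          T n r (y k) * ((partial k ^^ Suc r) (K i) (Phs y) * (2 * pi * cos (2 * pi * y k)))))"
      apply (subst partial_def)
      apply (subst eq)
      by (rule DERIV_imp_deriv[OF D])
    also have "\<dots> = (\<Sum>i\<in>I. c i y * (\<Sum>r\<le>Suc n. T (Suc n) r (y k) * (partial k ^^ r) (K i) (Phs y)))"
      by (subst T_shift_sum[symmetric]) simp
    finally show "(partial k ^^ Suc n) (\<lambda>y. \<Sum>i\<in>I. c i y * K i (Phs y)) y =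
       (\<Sum>i\<in>I. c i y * (\<Sum>r\<le>Suc n. T (Suc n) r (y k) * (partial k ^^ r) (K i) (Phs y)))" .
  qed
qed

end


lemma mderiv_cong: "(\<And>j. j < k \<Longrightarrow> \<nu> j = \<mu> j) \<Longrightarrow> mderiv k \<nu> f = mderiv k \<mu> f"
  unfolding mderiv_Dl using lst_cong by metis

context sm begin

lemma mderiv_SM: "f \<in> SM \<sigma> \<Longrightarrow> mderiv k \<nu> f \<in> SM \<sigma>"
  unfolding mderiv_Dl by (rule Dl_SM)

lemma rep:
  assumes K: "K \<in> SM \<sigma>"
  shows "mderiv k \<nu> (\<lambda>z. K (Phs z)) =
    (\<lambda>y. \<Sum>m\<in>Pi\<^sub>E {..<k} (\<lambda>j. {..\<nu> j}). (\<Prod>j<k. T (\<nu> j) (m j) (y j)) * mderiv k m K (Phs y))"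
proof (induction k)
  case 0
  then show ?case by simp
next
  case (Suc k)
  let ?I = "Pi\<^sub>E {..<k} (\<lambda>j. {..\<nu> j})"
  have "mderiv (Suc k) \<nu> (\<lambda>z. K (Phs z)) = (partial k ^^ \<nu> k)
     (\<lambda>y. \<Sum>m\<in>?I. (\<Prod>j<k. T (\<nu> j) (m j) (y j)) * mderiv k m K (Phs y))"
    using Suc.IH by simp
  also have "\<dots> = (\<lambda>y. \<Sum>m\<in>?I. (\<Prod>j<k. T (\<nu> j) (m j) (y j)) *
       (\<Sum>r\<le>\<nu> k. T (\<nu> k) r (y k) * (partial k ^^ r) (mderiv k m K) (Phs y)))"
    by (rule oneD) (auto intro: mderiv_SM K finite_PiE intro!: prod.cong)
  also have "\<dots> = (\<lambda>y. \<Sum>m\<in>Pi\<^sub>E {..<Suc k} (\<lambda>j. {..\<nu> j}). (\<Prod>j<Suc k. T (\<nu> j) (m j) (y j)) * mderiv (Suc k) m K (Phs y))"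
  proof
    fix y
    have ins: "{..<Suc k} = insert k {..<k}" by auto
    have "(\<Sum>m\<in>Pi\<^sub>E {..<Suc k} (\<lambda>j. {..\<nu> j}). (\<Prod>j<Suc k. T (\<nu> j) (m j) (y j)) * mderiv (Suc k) m K (Phs y))
      = (\<Sum>(r, m)\<in>{..\<nu> k} \<times> ?I. (\<Prod>j<Suc k. T (\<nu> j) ((m(k := r)) j) (y j)) * mderiv (Suc k) (m(k := r)) K (Phs y))"
      unfolding ins PiE_insert_eq
      by (subst sum.reindex) (auto intro: inj_combinator simp: case_prod_beta)
    also have "\<dots> = (\<Sum>r\<le>\<nu> k. \<Sum>m\<in>?I. (\<Prod>j<Suc k. T (\<nu> j) ((m(k := r)) j) (y j)) * mderiv (Suc k) (m(k := r)) K (Phs y))"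
      by (rule sum.cartesian_product[symmetric])
    also have "\<dots> = (\<Sum>m\<in>?I. \<Sum>r\<le>\<nu> k. (\<Prod>j<Suc k. T (\<nu> j) ((m(k := r)) j) (y j)) * mderiv (Suc k) (m(k := r)) K (Phs y))"
      by (rule sum.swap)
    also have "\<dots> = (\<Sum>m\<in>?I. (\<Prod>j<k. T (\<nu> j) (m j) (y j)) *
       (\<Sum>r\<le>\<nu> k. T (\<nu> k) r (y k) * (partial k ^^ r) (mderiv k m K) (Phs y)))"
    proof (rule sum.cong[OF refl])
      fix m assume "m \<in> ?I"
      show "(\<Sum>r\<le>\<nu> k. (\<Prod>j<Suc k. T (\<nu> j) ((m(k := r)) j) (y j)) * mderiv (Suc k) (m(k := r)) K (Phs y)) =
        (\<Prod>j<k. T (\<nu> j) (m j) (y j)) * (\<Sum>r\<le>\<nu> k. T (\<nu> k) r (y k) * (partial k ^^ r) (mderiv k m K) (Phs y))"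
        unfolding sum_distrib_left
      proof (rule sum.cong[OF refl])
        fix r
        have p: "(\<Prod>j<Suc k. T (\<nu> j) ((m(k := r)) j) (y j)) = T (\<nu> k) r (y k) * (\<Prod>j<k. T (\<nu> j) (m j) (y j))"
          by (simp add: lessThan_Suc)
        have md: "mderiv k (m(k := r)) K = mderiv k m K" by (rule mderiv_cong) simp
        show "(\<Prod>j<Suc k. T (\<nu> j) ((m(k := r)) j) (y j)) * mderiv (Suc k) (m(k := r)) K (Phs y) =
          (\<Prod>j<k. T (\<nu> j) (m j) (y j)) * (T (\<nu> k) r (y k) * (partial k ^^ r) (mderiv k m K) (Phs y))"
          unfolding p by (simp add: md)
      qed
    qed
    finally show "(\<Sum>m\<in>?I. (\<Prod>j<k. T (\<nu> j) (m j) (y j)) *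
       (\<Sum>r\<le>\<nu> k. T (\<nu> k) r (y k) * (partial k ^^ r) (mderiv k m K) (Phs y))) =
       (\<Sum>m\<in>Pi\<^sub>E {..<Suc k} (\<lambda>j. {..\<nu> j}). (\<Prod>j<Suc k. T (\<nu> j) (m j) (y j)) * mderiv (Suc k) m K (Phs y))" by simp
  qed
  finally show ?case .
qed

end


lemma SM_comp0: "f \<in> SM \<sigma> \<Longrightarrow> (\<lambda>y. \<sigma> (f y)) \<in> SM \<sigma>"
  using SM.comp[of f \<sigma> 0] by simp

lemma bnd_nonneg:
  assumes "\<forall>j. \<beta> j > 0" "\<forall>n. fps_nth F n \<ge> 0"
  shows "bnd \<beta> F js \<ge> 0"
proof -
  have "0 < prod_list (map \<beta> js)" using assms(1) by (induction js) auto
  then show ?thesis unfolding bnd_def using assms(2) by (auto intro!: mult_nonneg_nonneg)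
qed

locale netloc = sm \<sigma> for \<sigma> :: "real \<Rightarrow> real" +
  fixes s L :: nat and d :: "nat \<Rightarrow> nat"
    and W :: "nat \<Rightarrow> nat \<Rightarrow> nat \<Rightarrow> real" and v :: "nat \<Rightarrow> nat \<Rightarrow> real"
    and \<beta> R :: "nat \<Rightarrow> real" and \<xi> \<tau> :: real
  assumes s: "s \<ge> 1" and L: "L \<ge> 1"
    and d0: "d 0 = s" and dpos: "\<forall>k\<le>Suc L. d k \<ge> 1"
    and \<beta>pos: "\<forall>j. \<beta> j > 0" and Rpos: "\<forall>l\<ge>1. R l > 0"
    and \<xi>: "\<xi> > 0" and \<tau>: "\<tau> > 0"
    and W0: "\<forall>p<d 1. \<forall>j<s. \<bar>W 0 p j\<bar> \<le> \<beta> j"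
    and Wl: "\<forall>l. 1 \<le> l \<and> l \<le> L \<longrightarrow>
               Max ((\<lambda>p. \<Sum>q<d l. \<bar>W l p q\<bar>) ` {..<d (Suc l)}) \<le> R l"
    and \<sigma>bd: "\<forall>n\<ge>1. \<forall>x. \<bar>(deriv ^^ n) \<sigma> x\<bar> \<le> \<xi> * \<tau> ^ n * fact n"
begin

abbreviation N where "N l y p \<equiv> net (\<lambda>x. x) \<sigma> s d W v l y p"

lemma net_SM: "(\<lambda>y. N l y p) \<in> SM \<sigma>"
proof (induction l arbitrary: p)
  case 0
  have "(\<lambda>y. (\<Sum>j<s. W 0 p j * y j) + v 0 p) \<in> SM \<sigma>"
    by (intro SM.add SM_sum SM.mult SM.const SM.coord) auto
  then show ?case by simp
next
  case (Suc l)
  have "(\<lambda>y. (\<Sum>q<d (Suc l). W (Suc l) p q * \<sigma> (N l y q)) + v (Suc l) p) \<in> SM \<sigma>"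
    by (intro SM.add SM_sum SM.mult SM.const SM_comp0 Suc.IH) auto
  then show ?case by simp
qed

lemma Pk_0: "Pk \<xi> \<tau> R 0 = 1" unfolding Pk_def by simp
lemma Sl_0: "Sl \<xi> \<tau> R 0 = 0" unfolding Sl_def by simp
lemma Pk_Suc: "Pk \<xi> \<tau> R (Suc l) = \<xi> * \<tau> * R (Suc l) * Pk \<xi> \<tau> R l"
  unfolding Pk_def by (simp add: prod.nat_ivl_Suc' mult.commute)
lemma Sl_Suc: "Sl \<xi> \<tau> R (Suc l) = Sl \<xi> \<tau> R l + \<tau> * Pk \<xi> \<tau> R l"
  unfolding Sl_def by (simp add: algebra_simps)
lemma Pk_pos: "Pk \<xi> \<tau> R l > 0"
  unfolding Pk_def using \<xi> \<tau> Rpos by (auto intro!: prod_pos)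
lemma Sl_nonneg: "Sl \<xi> \<tau> R l \<ge> 0"
  unfolding Sl_def using \<tau> Pk_pos by (auto intro!: mult_nonneg_nonneg sum_nonneg simp: less_imp_le)
lemma Sl_pos: "l \<ge> 1 \<Longrightarrow> Sl \<xi> \<tau> R l > 0"
proof (cases l)
  case (Suc k)
  then show ?thesis using Sl_Suc[of k] Sl_nonneg[of k] Pk_pos[of k] \<tau>
    by (smt (verit) mult_pos_pos)
qed simp

lemma Gf_nonneg: "P \<ge> 0 \<Longrightarrow> S \<ge> 0 \<Longrightarrow> fps_nth (Gf P S) n \<ge> 0"
  unfolding Gf_nth by auto

lemma layer0: 
  assumes q: "q < d 1"
  shows "\<forall>js y. js \<noteq> [] \<longrightarrow> \<bar>Dl js (\<lambda>y. N 0 y q) y\<bar> \<le> bnd \<beta> (Gf 1 0) js"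
proof (intro allI impI)
  fix js :: "nat list" and y
  assume "js \<noteq> []"
  then obtain js' j where js: "js = js' @ [j]" by (metis rev_exhaust)
  have ps: "partial j (\<lambda>y. \<Sum>i<s. W 0 q i * y i) = (\<lambda>y. \<Sum>i<s. partial j (\<lambda>y. W 0 q i * y i) y)"
    by (rule partial_sum) (auto intro: SM.mult SM.const SM.coord)
  have "partial j (\<lambda>y. (\<Sum>i<s. W 0 q i * y i) + v 0 q) = (\<lambda>y. (\<Sum>i<s. W 0 q i * (if i = j then 1 else 0)) + 0)"
    by (subst partial_add) (auto intro!: SM_sum SM.mult SM.const SM.coord
        simp: ps partial_cmult[OF SM.coord] partial_coord partial_const)
  also have "\<dots> = (\<lambda>y. if j < s then W 0 q j else 0)"
    by (auto simp: if_distrib cong: if_cong)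
  finally have pj: "partial j (\<lambda>y. (\<Sum>i<s. W 0 q i * y i) + v 0 q) = (\<lambda>y. if j < s then W 0 q j else 0)" .
  have "0 \<le> bnd \<beta> (Gf 1 0) js'" by (rule bnd_nonneg[OF \<beta>pos]) (simp add: Gf_nth)
  show "\<bar>Dl js (\<lambda>y. N 0 y q) y\<bar> \<le> bnd \<beta> (Gf 1 0) js"
  proof (cases "js' = []")
    case True
    have "\<bar>(if j < s then W 0 q j else 0)\<bar> \<le> \<beta> j" using W0 q \<beta>pos by (auto intro: less_imp_le)
    then show ?thesis using True by (simp add: js Dl_snoc pj bnd_def Gf_nth)
  next
    case False
    have "bnd \<beta> (Gf 1 0) js \<ge> 0" by (rule bnd_nonneg[OF \<beta>pos]) (simp add: Gf_nth)
    then show ?thesis using False by (simp add: js Dl_snoc pj Dl_const)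
  qed
qed


lemma layer_step:
  assumes l: "Suc l \<le> L"
    and IH: "\<forall>q<d (Suc l). \<forall>js y. js \<noteq> [] \<longrightarrow> \<bar>Dl js (\<lambda>y. N l y q) y\<bar> \<le> bnd \<beta> (Gf (Pk \<xi> \<tau> R l) (Sl \<xi> \<tau> R l)) js"
    and p: "p < d (Suc (Suc l))"
  shows "\<forall>js y. js \<noteq> [] \<longrightarrow> \<bar>Dl js (\<lambda>y. N (Suc l) y p) y\<bar> \<le> bnd \<beta> (Gf (Pk \<xi> \<tau> R (Suc l)) (Sl \<xi> \<tau> R (Suc l))) js"
proof (intro allI impI)
  fix js :: "nat list" and y
  assume js: "js \<noteq> []"
  define G where "G = Gf (Pk \<xi> \<tau> R l) (Sl \<xi> \<tau> R l)"
  define B where "B = bnd \<beta> (Phi \<xi> \<tau> G 0) js"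
  have G0: "fps_nth G 0 = 0" unfolding G_def Gf_nth by simp
  have Dq: "\<bar>Dl js (\<lambda>y. \<sigma> (N l y q)) y\<bar> \<le> B" if q: "q < d (Suc l)" for q
  proof -
    have Iq: "\<forall>js y. js \<noteq> [] \<longrightarrow> \<bar>Dl js (\<lambda>y. N l y q) y\<bar> \<le> bnd \<beta> G js"
      using IH q unfolding G_def by blast
    have C: "\<forall>k js' y'. length js' \<le> length js \<longrightarrow> (k \<ge> 1 \<or> js' \<noteq> []) \<longrightarrow>
       \<bar>Dl js' (\<lambda>y. (deriv ^^ k) \<sigma> (N l y q)) y'\<bar> \<le> bnd \<beta> (Phi \<xi> \<tau> G k) js'"
      by (rule comp_bound[OF net_SM G0 Iq \<sigma>bd])
    then have "\<bar>Dl js (\<lambda>y. (deriv ^^ 0) \<sigma> (N l y q)) y\<bar> \<le> bnd \<beta> (Phi \<xi> \<tau> G 0) js"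
      using js by blast
    then show ?thesis unfolding B_def by simp
  qed
  have B0: "B \<ge> 0" unfolding B_def
    by (rule bnd_nonneg[OF \<beta>pos]) (auto simp: G_def Phi0_Gf intro!: mult_nonneg_nonneg zero_le_power Sl_nonneg less_imp_le[OF Pk_pos] less_imp_le[OF \<xi>] less_imp_le[OF \<tau>] add_nonneg_nonneg)
  have "(\<Sum>q<d (Suc l). \<bar>W (Suc l) p q\<bar>) \<le> Max ((\<lambda>p. \<Sum>q<d (Suc l). \<bar>W (Suc l) p q\<bar>) ` {..<d (Suc (Suc l))})"
    using p by (intro Max_ge) auto
  also have "\<dots> \<le> R (Suc l)" using Wl l by auto
  finally have Rb: "(\<Sum>q<d (Suc l). \<bar>W (Suc l) p q\<bar>) \<le> R (Suc l)" .
  have "Dl js (\<lambda>y. N (Suc l) y p) = Dl js (\<lambda>y. (\<Sum>q<d (Suc l). W (Suc l) p q * \<sigma> (N l y q)) + v (Suc l) p)"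
    by simp
  also have "\<dots> = (\<lambda>y. (\<Sum>q<d (Suc l). W (Suc l) p q * Dl js (\<lambda>y. \<sigma> (N l y q)) y))"
    apply (subst Dl_add)
      apply (auto intro!: SM_sum SM.mult SM.const SM_comp0 net_SM simp: Dl_const[OF js])
    apply (subst Dl_sum)
      apply (auto intro!: SM.mult SM.const SM_comp0 net_SM simp: Dl_cmult[OF SM_comp0[OF net_SM]])
    done
  finally have "\<bar>Dl js (\<lambda>y. N (Suc l) y p) y\<bar> = \<bar>\<Sum>q<d (Suc l). W (Suc l) p q * Dl js (\<lambda>y. \<sigma> (N l y q)) y\<bar>"
    by simp
  also have "\<dots> \<le> (\<Sum>q<d (Suc l). \<bar>W (Suc l) p q\<bar> * B)"
    by (rule order_trans[OF sum_abs]) (auto simp: abs_mult intro!: sum_mono mult_left_mono Dq)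
  also have "\<dots> \<le> R (Suc l) * B"
    unfolding sum_distrib_right[symmetric] by (rule mult_right_mono[OF Rb B0])
  also have "\<dots> = bnd \<beta> (Gf (Pk \<xi> \<tau> R (Suc l)) (Sl \<xi> \<tau> R (Suc l))) js"
    using js unfolding B_def G_def bnd_def Phi0_Gf Gf_nth Pk_Suc Sl_Suc by (simp add: algebra_simps)
  finally show "\<bar>Dl js (\<lambda>y. N (Suc l) y p) y\<bar> \<le> bnd \<beta> (Gf (Pk \<xi> \<tau> R (Suc l)) (Sl \<xi> \<tau> R (Suc l))) js" .
qed

lemma layers:
  "l \<le> L \<Longrightarrow> \<forall>q<d (Suc l). \<forall>js y. js \<noteq> [] \<longrightarrow> \<bar>Dl js (\<lambda>y. N l y q) y\<bar> \<le> bnd \<beta> (Gf (Pk \<xi> \<tau> R l) (Sl \<xi> \<tau> R l)) js"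
proof (induction l)
  case 0
  then show ?case using layer0 by (simp add: Pk_0 Sl_0)
next
  case (Suc l)
  then show ?case using layer_step[of l] by simp
qed


lemma prod_split: "(\<Prod>j<s. (S * \<beta> j) ^ m j) = S ^ mabs s m * (\<Prod>j<s. \<beta> j ^ m j)"
  unfolding mabs_def power_mult_distrib prod.distrib power_sum ..

lemma deriv_pt:
  assumes l: "1 \<le> l" "l \<le> L" and p: "p < d (Suc l)" and m: "mabs s m \<ge> 1"
  shows "\<bar>mderiv s m (\<lambda>z. N l z p) x\<bar> \<le> Pk \<xi> \<tau> R l / Sl \<xi> \<tau> R l * fact (mabs s m) * (\<Prod>j<s. (Sl \<xi> \<tau> R l * \<beta> j) ^ m j)"
proof -
  define js where "js = lst m s"
  have len: "length js = mabs s m" unfolding js_def length_lst mabs_def ..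
  then have js: "js \<noteq> []" using m by auto
  obtain n where n: "mabs s m = Suc n" using m by (cases "mabs s m") auto
  have S: "Sl \<xi> \<tau> R l > 0" using Sl_pos l by simp
  have "\<bar>mderiv s m (\<lambda>z. N l z p) x\<bar> = \<bar>Dl js (\<lambda>z. N l z p) x\<bar>" unfolding mderiv_Dl js_def ..
  also have "\<dots> \<le> bnd \<beta> (Gf (Pk \<xi> \<tau> R l) (Sl \<xi> \<tau> R l)) js" using layers[OF l(2)] p js by blast
  also have "\<dots> = fact (Suc n) * (Pk \<xi> \<tau> R l * Sl \<xi> \<tau> R l ^ n) * (\<Prod>j<s. \<beta> j ^ m j)"
  proof -
    have "prod_list (map \<beta> js) = (\<Prod>j<s. \<beta> j ^ m j)" unfolding js_def prod_lst ..
    moreover have "length js = Suc n" using len n by simp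
    ultimately show ?thesis unfolding bnd_def Gf_nth by simp
  qed
  also have "\<dots> = Pk \<xi> \<tau> R l / Sl \<xi> \<tau> R l * fact (mabs s m) * (\<Prod>j<s. (Sl \<xi> \<tau> R l * \<beta> j) ^ m j)"
    unfolding prod_split n using S by (simp add: field_simps)
  finally show ?thesis .
qed

lemma sigma_bounded: "\<exists>M. \<forall>x. \<bar>x\<bar> \<le> K \<longrightarrow> \<bar>\<sigma> x\<bar> \<le> M"
proof -
  have "continuous_on {-K..K} \<sigma>"
  proof (intro continuous_at_imp_continuous_on ballI)
    fix x
    show "isCont \<sigma> x" using smooth[rule_format, of 0 x] by (auto intro: DERIV_isCont)
  qed
  then have "bounded (\<sigma> ` {-K..K})" by (intro compact_imp_bounded compact_continuous_image) auto
  then obtain M where "\<forall>z\<in>\<sigma> ` {-K..K}. norm z \<le> M" unfolding bounded_iff by blast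
  then show ?thesis by (intro exI[of _ M] allI impI) (auto simp: abs_le_iff)
qed

lemma net_bounded: "\<exists>K. \<forall>q<d (Suc l). \<forall>y. (\<forall>j<s. \<bar>y j\<bar> \<le> 1) \<longrightarrow> \<bar>N l y q\<bar> \<le> K"
proof (induction l)
  case 0
  define K where "K = (\<Sum>q<d 1. (\<Sum>j<s. \<bar>W 0 q j\<bar>) + \<bar>v 0 q\<bar>)"
  show ?case
  proof (intro exI[of _ K] allI impI)
    fix q and y :: "nat \<Rightarrow> real" assume q: "q < d (Suc 0)" and y: "\<forall>j<s. \<bar>y j\<bar> \<le> 1"
    have "\<bar>N 0 y q\<bar> = \<bar>(\<Sum>j<s. W 0 q j * y j) + v 0 q\<bar>" by simp
    also have "\<dots> \<le> \<bar>\<Sum>j<s. W 0 q j * y j\<bar> + \<bar>v 0 q\<bar>" by (rule abs_triangle_ineq)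
    also have "\<dots> \<le> (\<Sum>j<s. \<bar>W 0 q j * y j\<bar>) + \<bar>v 0 q\<bar>" by (intro add_right_mono sum_abs)
    also have "\<dots> \<le> (\<Sum>j<s. \<bar>W 0 q j\<bar>) + \<bar>v 0 q\<bar>"
      using y by (auto intro!: sum_mono simp: abs_mult intro: mult_left_le)
    also have "\<dots> \<le> K" unfolding K_def using q
      by (intro member_le_sum[of q "{..<d 1}" "\<lambda>q. (\<Sum>j<s. \<bar>W 0 q j\<bar>) + \<bar>v 0 q\<bar>"]) (auto intro: add_nonneg_nonneg sum_nonneg)
    finally show "\<bar>N 0 y q\<bar> \<le> K" .
  qed
next
  case (Suc l)
  then obtain K where K: "\<forall>q<d (Suc l). \<forall>y. (\<forall>j<s. \<bar>y j\<bar> \<le> 1) \<longrightarrow> \<bar>N l y q\<bar> \<le> K" by blast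
  obtain M0 where M0: "\<forall>x. \<bar>x\<bar> \<le> K \<longrightarrow> \<bar>\<sigma> x\<bar> \<le> M0" using sigma_bounded by blast
  define M where "M = max M0 0"
  define K' where "K' = (\<Sum>q<d (Suc (Suc l)). (\<Sum>q'<d (Suc l). \<bar>W (Suc l) q q'\<bar> * M) + \<bar>v (Suc l) q\<bar>)"
  show ?case
  proof (intro exI[of _ K'] allI impI)
    fix q and y :: "nat \<Rightarrow> real" assume q: "q < d (Suc (Suc l))" and y: "\<forall>j<s. \<bar>y j\<bar> \<le> 1"
    have "\<bar>N (Suc l) y q\<bar> = \<bar>(\<Sum>q'<d (Suc l). W (Suc l) q q' * \<sigma> (N l y q')) + v (Suc l) q\<bar>" by simp
    also have "\<dots> \<le> \<bar>\<Sum>q'<d (Suc l). W (Suc l) q q' * \<sigma> (N l y q')\<bar> + \<bar>v (Suc l) q\<bar>" by (rule abs_triangle_ineq)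
    also have "\<dots> \<le> (\<Sum>q'<d (Suc l). \<bar>W (Suc l) q q' * \<sigma> (N l y q')\<bar>) + \<bar>v (Suc l) q\<bar>" by (intro add_right_mono sum_abs)
    also have "\<dots> \<le> (\<Sum>q'<d (Suc l). \<bar>W (Suc l) q q'\<bar> * M) + \<bar>v (Suc l) q\<bar>"
    proof -
      have "\<bar>\<sigma> (N l y q')\<bar> \<le> M" if "q' < d (Suc l)" for q'
      proof -
        have "\<bar>N l y q'\<bar> \<le> K" using K y that by blast
        then have "\<bar>\<sigma> (N l y q')\<bar> \<le> M0" using M0 by blast
        then show ?thesis unfolding M_def by linarith
      qed
      then show ?thesis by (auto intro!: sum_mono mult_left_mono simp: abs_mult)
    qed
    also have "\<dots> \<le> K'" unfolding K'_def using q
      by (intro member_le_sum[of q "{..<d (Suc (Suc l))}" "\<lambda>q. (\<Sum>q'<d (Suc l). \<bar>W (Suc l) q q'\<bar> * M) + \<bar>v (Suc l) q\<bar>"])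
         (auto intro!: add_nonneg_nonneg sum_nonneg mult_nonneg_nonneg simp: M_def)
    finally show "\<bar>N (Suc l) y q\<bar> \<le> K'" .
  qed
qed

lemma supnorm_ge:
  assumes l: "l \<le> L" and K: "\<forall>y\<in>unit_cube s. \<forall>q<d (Suc l). \<bar>F y q\<bar> \<le> K"
    and y: "y \<in> unit_cube s" and p: "p < d (Suc l)"
  shows "\<bar>F y p\<bar> \<le> net_supnorm s d F l"
proof -
  have "d (Suc l) \<ge> 1" using dpos l by auto
  then have "0 \<in> {..<d (Suc l)}" by simp
  then have ne: "{..<d (Suc l)} \<noteq> {}" by blast
  have "\<bar>F y p\<bar> \<le> Max ((\<lambda>p. \<bar>F y p\<bar>) ` {..<d (Suc l)})" using p by (intro Max_ge) auto
  also have "\<dots> \<le> net_supnorm s d F l" unfolding net_supnorm_def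
  proof (rule cSUP_upper[OF y])
    show "bdd_above ((\<lambda>y. Max ((\<lambda>p. \<bar>F y p\<bar>) ` {..<d (Suc l)})) ` unit_cube s)"
      using K ne by (intro bdd_aboveI2[of _ _ K]) (auto simp: Max_le_iff)
  qed
  finally show ?thesis .
qed


lemma pt_bound:
  assumes l: "1 \<le> l" "l \<le> L" and p: "p < d (Suc l)"
    and Cz: "mabs s m = 0 \<Longrightarrow> \<bar>N l x p\<bar> \<le> Cz" and CzC: "Cz \<le> C"
    and PC: "Pk \<xi> \<tau> R l / Sl \<xi> \<tau> R l \<le> C"
  shows "\<bar>mderiv s m (\<lambda>z. N l z p) x\<bar> \<le> C * fact (mabs s m) * (\<Prod>j<s. (Sl \<xi> \<tau> R l * \<beta> j) ^ m j)"
proof (cases "mabs s m = 0")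
  case True
  then have m0: "\<forall>j<s. m j = 0" unfolding mabs_def by simp
  have "length (lst m s) = 0" using True unfolding length_lst mabs_def by simp
  then have "mderiv s m (\<lambda>z. N l z p) = (\<lambda>z. N l z p)" unfolding mderiv_Dl by simp
  moreover have "(\<Prod>j<s. (Sl \<xi> \<tau> R l * \<beta> j) ^ m j) = 1" using m0 by simp
  ultimately show ?thesis using True Cz CzC by simp
next
  case False
  have sb: "0 \<le> Sl \<xi> \<tau> R l * \<beta> j" for j
    by (intro mult_nonneg_nonneg Sl_nonneg) (use \<beta>pos in \<open>simp add: less_imp_le\<close>)
  have nn: "0 \<le> fact (mabs s m) * (\<Prod>j<s. (Sl \<xi> \<tau> R l * \<beta> j) ^ m j)"
  proof -
    have "0 \<le> (\<Prod>j<s. (Sl \<xi> \<tau> R l * \<beta> j) ^ m j)"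
      by (rule prod_nonneg) (use sb in simp)
    then show ?thesis by simp
  qed
  have "\<bar>mderiv s m (\<lambda>z. N l z p) x\<bar> \<le> Pk \<xi> \<tau> R l / Sl \<xi> \<tau> R l * fact (mabs s m) * (\<Prod>j<s. (Sl \<xi> \<tau> R l * \<beta> j) ^ m j)"
    using deriv_pt[OF l p] False by simp
  also have "\<dots> \<le> C * fact (mabs s m) * (\<Prod>j<s. (Sl \<xi> \<tau> R l * \<beta> j) ^ m j)"
    using mult_right_mono[OF PC nn] by (simp add: mult.assoc)
  finally show ?thesis .
qed

lemma cube_bound:
  assumes "l \<le> L"
  shows "\<exists>K. \<forall>y\<in>unit_cube s. \<forall>q<d (Suc l). \<bar>N l y q\<bar> \<le> K"
proof -
  obtain K where K: "\<forall>q<d (Suc l). \<forall>y. (\<forall>j<s. \<bar>y j\<bar> \<le> 1) \<longrightarrow> \<bar>N l y q\<bar> \<le> K"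
    using net_bounded by blast
  show ?thesis using K by (intro exI[of _ K]) (auto simp: unit_cube_def)
qed

lemma net_per: "net (\<lambda>x. sin (2 * pi * x)) \<sigma> s d W v l y p = N l (Phs y) p"
  by (induction l arbitrary: p) (auto simp: Phs_def)

lemma cube_bound_per:
  assumes "l \<le> L"
  shows "\<exists>K. \<forall>y\<in>unit_cube s. \<forall>q<d (Suc l). \<bar>net (\<lambda>x. sin (2 * pi * x)) \<sigma> s d W v l y q\<bar> \<le> K"
proof -
  obtain K where K: "\<forall>q<d (Suc l). \<forall>y. (\<forall>j<s. \<bar>y j\<bar> \<le> 1) \<longrightarrow> \<bar>N l y q\<bar> \<le> K"
    using net_bounded by blast
  have "\<forall>j<s. \<bar>Phs y j\<bar> \<le> 1" for y unfolding Phs_def by simp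
  then show ?thesis using K by (intro exI[of _ K]) (auto simp: net_per)
qed

lemma partA:
  assumes l: "1 \<le> l" "l \<le> L" and p: "p < d (Suc l)" and y: "y \<in> unit_cube s"
  shows "\<bar>mderiv s \<nu> (\<lambda>z. net (\<lambda>x. x) \<sigma> s d W v l z p) y\<bar>
        \<le> max (net_supnorm s d (net (\<lambda>x. x) \<sigma> s d W v l) l)
               (Pk \<xi> \<tau> R l / Sl \<xi> \<tau> R l)
          * fact (mabs s \<nu>) * (\<Prod>j<s. (Sl \<xi> \<tau> R l * \<beta> j) ^ \<nu> j)"
proof -
  obtain K where K: "\<forall>y\<in>unit_cube s. \<forall>q<d (Suc l). \<bar>N l y q\<bar> \<le> K" using cube_bound l by blast
  have sup: "\<bar>N l y p\<bar> \<le> net_supnorm s d (net (\<lambda>x. x) \<sigma> s d W v l) l"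
    by (rule supnorm_ge[OF l(2) K y p])
  show ?thesis
    by (rule pt_bound[OF l p, where Cz = "net_supnorm s d (net (\<lambda>x. x) \<sigma> s d W v l) l"])
       (rule sup, rule max.cobounded1, rule max.cobounded2)
qed

lemma partB:
  assumes l: "1 \<le> l" "l \<le> L" and p: "p < d (Suc l)" and y: "y \<in> unit_cube s"
  shows "\<bar>mderiv s \<nu> (\<lambda>z. net (\<lambda>x. sin (2 * pi * x)) \<sigma> s d W v l z p) y\<bar>
        \<le> max (net_supnorm s d (net (\<lambda>x. sin (2 * pi * x)) \<sigma> s d W v l) l)
               (Pk \<xi> \<tau> R l / Sl \<xi> \<tau> R l)
          * (2 * pi) ^ mabs s \<nu>
          * (\<Sum>m\<in>Pi\<^sub>E {..<s} (\<lambda>j. {..\<nu> j}).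
               fact (mabs s m) * (\<Prod>j<s. (Sl \<xi> \<tau> R l * \<beta> j) ^ m j)
               * (\<Prod>j<s. real (Stirling (\<nu> j) (m j))))"
proof -
  let ?C = "max (net_supnorm s d (net (\<lambda>x. sin (2 * pi * x)) \<sigma> s d W v l) l) (Pk \<xi> \<tau> R l / Sl \<xi> \<tau> R l)"
  let ?I = "Pi\<^sub>E {..<s} (\<lambda>j. {..\<nu> j})"
  let ?K = "\<lambda>x. N l x p"
  obtain K where K: "\<forall>y\<in>unit_cube s. \<forall>q<d (Suc l). \<bar>net (\<lambda>x. sin (2 * pi * x)) \<sigma> s d W v l y q\<bar> \<le> K"
    using cube_bound_per l by blast
  have sup: "\<bar>N l (Phs y) p\<bar> \<le> net_supnorm s d (net (\<lambda>x. sin (2 * pi * x)) \<sigma> s d W v l) l"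
    using supnorm_ge[OF l(2) K y p] by (subst (asm) net_per)
  have md: "\<bar>mderiv s m ?K (Phs y)\<bar> \<le> ?C * fact (mabs s m) * (\<Prod>j<s. (Sl \<xi> \<tau> R l * \<beta> j) ^ m j)" for m
    by (rule pt_bound[OF l p, where Cz = "net_supnorm s d (net (\<lambda>x. sin (2 * pi * x)) \<sigma> s d W v l) l"])
       (rule sup, rule max.cobounded1, rule max.cobounded2)
  have f: "(\<lambda>z. net (\<lambda>x. sin (2 * pi * x)) \<sigma> s d W v l z p) = (\<lambda>z. ?K (Phs z))"
    by (simp add: net_per)
  have eq: "mderiv s \<nu> (\<lambda>z. net (\<lambda>x. sin (2 * pi * x)) \<sigma> s d W v l z p) y =
     (\<Sum>m\<in>?I. (\<Prod>j<s. T (\<nu> j) (m j) (y j)) * mderiv s m ?K (Phs y))"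
    unfolding f rep[OF net_SM] ..
  have tm: "\<bar>(\<Prod>j<s. T (\<nu> j) (m j) (y j)) * mderiv s m ?K (Phs y)\<bar> \<le>
       (\<Prod>j<s. (2 * pi) ^ \<nu> j * real (Stirling (\<nu> j) (m j))) * (?C * fact (mabs s m) * (\<Prod>j<s. (Sl \<xi> \<tau> R l * \<beta> j) ^ m j))" for m
  proof -
    have t: "\<bar>\<Prod>j<s. T (\<nu> j) (m j) (y j)\<bar> \<le> (\<Prod>j<s. (2 * pi) ^ \<nu> j * real (Stirling (\<nu> j) (m j)))"
      unfolding abs_prod by (intro prod_mono conjI abs_ge_zero T_bound)
    have n2: "0 \<le> \<bar>mderiv s m ?K (Phs y)\<bar>" by (rule abs_ge_zero)
    have n1: "0 \<le> (\<Prod>j<s. (2 * pi) ^ \<nu> j * real (Stirling (\<nu> j) (m j)))"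
      by (rule order_trans[OF abs_ge_zero t])
    show ?thesis
      unfolding abs_mult by (rule mult_mono[OF t md n1 n2])
  qed
  have bd: "\<bar>\<Sum>m\<in>?I. (\<Prod>j<s. T (\<nu> j) (m j) (y j)) * mderiv s m ?K (Phs y)\<bar> \<le>
       (\<Sum>m\<in>?I. (\<Prod>j<s. (2 * pi) ^ \<nu> j * real (Stirling (\<nu> j) (m j))) *
        (?C * fact (mabs s m) * (\<Prod>j<s. (Sl \<xi> \<tau> R l * \<beta> j) ^ m j)))"
    by (rule order_trans[OF sum_abs sum_mono[OF tm]])
  have eq2: "(\<Sum>m\<in>?I. (\<Prod>j<s. (2 * pi) ^ \<nu> j * real (Stirling (\<nu> j) (m j))) *
        (?C * fact (mabs s m) * (\<Prod>j<s. (Sl \<xi> \<tau> R l * \<beta> j) ^ m j)))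
     = ?C * (2 * pi) ^ mabs s \<nu> * (\<Sum>m\<in>?I.
               fact (mabs s m) * (\<Prod>j<s. (Sl \<xi> \<tau> R l * \<beta> j) ^ m j)
               * (\<Prod>j<s. real (Stirling (\<nu> j) (m j))))"
  proof -
    have ac: "(a * b) * (c * f * q) = c * a * (f * q * b)" for a b c f q :: real
      by (simp only: mult_ac)
    have pw: "(2 * pi) ^ mabs s \<nu> = (\<Prod>j<s. (2 * pi) ^ \<nu> j)"
      unfolding mabs_def by (rule power_sum)
    show ?thesis
      unfolding sum_distrib_left pw prod.distrib
      by (rule sum.cong[OF refl], rule ac)
  qed
  show ?thesis
    unfolding eq by (rule order_trans[OF bd eq2[THEN eq_refl]])
qed

end

theorem theorem2p2:
  fixes s L :: nat and d :: "nat \<Rightarrow> nat"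
    and W :: "nat \<Rightarrow> nat \<Rightarrow> nat \<Rightarrow> real" and v :: "nat \<Rightarrow> nat \<Rightarrow> real"
    and \<sigma> :: "real \<Rightarrow> real" and \<beta> R :: "nat \<Rightarrow> real" and \<xi> \<tau> :: real
  assumes s: "s \<ge> 1" and L: "L \<ge> 1"
    and d0: "d 0 = s" and dpos: "\<forall>k\<le>Suc L. d k \<ge> 1"
    and smooth: "\<forall>n x. ((deriv ^^ n) \<sigma> has_real_derivative (deriv ^^ Suc n) \<sigma> x) (at x)"
    and \<beta>pos: "\<forall>j. \<beta> j > 0" and Rpos: "\<forall>l\<ge>1. R l > 0"
    and \<xi>: "\<xi> > 0" and \<tau>: "\<tau> > 0"
    and W0: "\<forall>p<d 1. \<forall>j<s. \<bar>W 0 p j\<bar> \<le> \<beta> j"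
    and Wl: "\<forall>l. 1 \<le> l \<and> l \<le> L \<longrightarrow>
               Max ((\<lambda>p. \<Sum>q<d l. \<bar>W l p q\<bar>) ` {..<d (Suc l)}) \<le> R l"
    and \<sigma>bd: "\<forall>n\<ge>1. \<forall>x. \<bar>(deriv ^^ n) \<sigma> x\<bar> \<le> \<xi> * \<tau> ^ n * fact n"
  shows
   "(\<forall>l p \<nu> y. 1 \<le> l \<and> l \<le> L \<and> p < d (Suc l) \<and> y \<in> unit_cube s \<longrightarrow>
      \<bar>mderiv s \<nu> (\<lambda>z. net (\<lambda>x. x) \<sigma> s d W v l z p) y\<bar>
        \<le> max (net_supnorm s d (net (\<lambda>x. x) \<sigma> s d W v l) l)
               (Pk \<xi> \<tau> R l / Sl \<xi> \<tau> R l)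
          * fact (mabs s \<nu>) * (\<Prod>j<s. (Sl \<xi> \<tau> R l * \<beta> j) ^ \<nu> j))
    \<and>
    (\<forall>l p \<nu> y. 1 \<le> l \<and> l \<le> L \<and> p < d (Suc l) \<and> y \<in> unit_cube s \<longrightarrow>
      \<bar>mderiv s \<nu> (\<lambda>z. net (\<lambda>x. sin (2 * pi * x)) \<sigma> s d W v l z p) y\<bar>
        \<le> max (net_supnorm s d (net (\<lambda>x. sin (2 * pi * x)) \<sigma> s d W v l) l)
               (Pk \<xi> \<tau> R l / Sl \<xi> \<tau> R l)
          * (2 * pi) ^ mabs s \<nu>
          * (\<Sum>m\<in>Pi\<^sub>E {..<s} (\<lambda>j. {..\<nu> j}).
               fact (mabs s m) * (\<Prod>j<s. (Sl \<xi> \<tau> R l * \<beta> j) ^ m j)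
               * (\<Prod>j<s. real (Stirling (\<nu> j) (m j)))))"
proof -
  interpret netloc \<sigma> s L d W v \<beta> R \<xi> \<tau>
    by unfold_locales (fact s L d0 dpos smooth \<beta>pos Rpos \<xi> \<tau> W0 Wl \<sigma>bd)+
  show ?thesis
    apply (intro conjI allI impI)
     apply (elim conjE, rule partA, assumption+)
    apply (elim conjE, rule partB, assumption+)
    done
qed

end
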